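(* Let $X\in\mathbb{R}^{N_1\times N_2}$ be $k$-sparse. For $j\in\{1,2\}$ let $U_j\in\mathbb{R}^{m_j\times N_j}$ satisfy the NSP$_k$ property, and let $Y=U_1XU_2^T$. Let $K=\operatorname{rank}(Y)$ and let $Y=\sum_{i=1}^K b_i^{(1)}(b_i^{(2)})^T$ be any rank decomposition of $Y$ (e.g. from the SVD), with $b_i^{(1)}\in\mathbb{R}^{m_1}$, $b_i^{(2)}\in\mathbb{R}^{m_2}$. For $i\in[K]$, $j\in\{1,2\}$ consider $$\hat w_i^{(j)}=\arg\min_{w\in\mathbb{R}^{N_j}}\|w\|_1\quad\text{s.t.}\quad b_i^{(j)}=U_jw.$$ Then each of these problems has a unique solution $\hat w_i^{(j)}$, which is $k$-sparse, and $$X=\sum_{i=1}^K\hat w_i^{(1)}(\hat w_i^{(2)})^T.$$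
   Context: A vector or matrix is $k$-sparse if it has at most $k$ nonzero entries. $[n]=\{1,\dots,n\}$. For $w\in\mathbb{R}^N$ and $S\subset[N]$, $\|w_S\|_1=\sum_{i\in S}|w_i|$ and $S^c=[N]\setminus S$. A matrix $A\in\mathbb{R}^{m\times N}$ satisfies the null space property of order $k$ (NSP$_k$) if for every $w\neq 0$ with $Aw=0$ and every $S\subset[N]$ with $|S|=k$ one has $\|w_S\|_1<\|w_{S^c}\|_1$. A rank decomposition of a matrix $Y$ of rank $K$ is an expression $Y=\sum_{i=1}^K b_i^{(1)}(b_i^{(2)})^T$ with exactly $K$ terms. *)

theory Defs
  imports "HOL-Analysis.Analysis"
begin

definition vec_sparse :: "nat \<Rightarrow> real^'n \<Rightarrow> bool" where
  "vec_sparse k x \<longleftrightarrow> card {i. x $ i \<noteq> 0} \<le> k"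

definition mat_sparse :: "nat \<Rightarrow> real^'n^'m \<Rightarrow> bool" where
  "mat_sparse k X \<longleftrightarrow> card {(i, j). X $ i $ j \<noteq> 0} \<le> k"

definition l1_on :: "'n set \<Rightarrow> real^'n \<Rightarrow> real" where
  "l1_on S w = (\<Sum>i\<in>S. \<bar>w $ i\<bar>)"

definition l1 :: "real^'n \<Rightarrow> real" where
  "l1 w = l1_on UNIV w"

definition NSP :: "nat \<Rightarrow> real^'n^'m \<Rightarrow> bool" where
  "NSP k A \<longleftrightarrow> (\<forall>w. w \<noteq> 0 \<and> A *v w = 0 \<longrightarrow>
      (\<forall>S. card S \<le> k \<longrightarrow> l1_on S w < l1_on (- S) w))"

definition l1_argmin :: "real^'n^'m \<Rightarrow> real^'m \<Rightarrow> real^'n \<Rightarrow> bool" where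
  "l1_argmin U b w \<longleftrightarrow> U *v w = b \<and> (\<forall>v. U *v v = b \<longrightarrow> l1 w \<le> l1 v)"

definition outer :: "real^'m \<Rightarrow> real^'n \<Rightarrow> real^'n^'m" where
  "outer u v = (\<chi> r c. u $ r * v $ c)"

end

theory Submission
  imports Defs
begin

lemma outer_sum_mult:
  fixes b :: "nat \<Rightarrow> real^'m" and c :: "nat \<Rightarrow> real^'n"
  shows "(\<Sum>i<K. outer (b i) (c i)) *v x = (\<Sum>i<K. (c i \<bullet> x) *\<^sub>R b i)"
  by (simp add: vec_eq_iff matrix_vector_mult_def outer_def sum_component inner_vec_def
        sum_distrib_left sum_distrib_right mult_ac) (intro allI sum.swap)

lemma rank_decomp_range:
  fixes A :: "real^'n^'m" and b :: "nat \<Rightarrow> real^'m" and c :: "nat \<Rightarrow> real^'n"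
  assumes "rank A = K" "A = (\<Sum>i<K. outer (b i) (c i))" "j < K"
  shows "b j \<in> range ((*v) A)"
proof -
  let ?V = "range ((*v) A)" and ?B = "span (b ` {..<K})"
  have sub: "?V \<subseteq> ?B"
  proof
    fix y assume "y \<in> ?V"
    then obtain x where "y = A *v x" by auto
    then have y: "y = (\<Sum>i<K. (c i \<bullet> x) *\<^sub>R b i)" using assms(2) outer_sum_mult by simp
    have "(c i \<bullet> x) *\<^sub>R b i \<in> ?B" if "i \<in> {..<K}" for i
      using that by (intro span_scale span_base imageI)
    then have "(\<Sum>i<K. (c i \<bullet> x) *\<^sub>R b i) \<in> ?B" by (rule span_sum)
    then show "y \<in> ?B" using y by simp
  qed
  have "dim ?B \<le> card (b ` {..<K})" by (rule dim_le_card) auto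
  also have "\<dots> \<le> K" using card_image_le[of "{..<K}" b] by simp
  also have "K = dim ?V" using assms(1) rank_dim_range by metis
  finally have le: "dim ?B \<le> dim ?V" .
  have sV: "subspace ?V"
    using linear_subspace_image[OF matrix_vector_mul_linear[of A] subspace_UNIV] by simp
  have "?V = ?B" by (rule subspace_dim_equal[OF sV subspace_span sub le])
  then show ?thesis using assms(3) by (simp add: span_base)
qed

lemma l1_split: "l1 w = l1_on S w + l1_on (- S) w"
proof -
  have "(UNIV::'a set) = S \<union> - S" by auto
  then have "l1 w = (\<Sum>i\<in>S \<union> - S. \<bar>w $ i\<bar>)" unfolding l1_def l1_on_def by simp
  also have "\<dots> = l1_on S w + l1_on (- S) w" unfolding l1_on_def
    by (rule sum.union_disjoint) auto
  finally show ?thesis .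
qed

lemma l1_on_nonneg: "0 \<le> l1_on S w" unfolding l1_on_def by (simp add: sum_nonneg)

lemma l1_on_zero: "(\<And>i. i \<in> S \<Longrightarrow> w $ i = 0) \<Longrightarrow> l1_on S w = 0"
  unfolding l1_on_def by simp

lemma l1_on_tri: "l1_on S v \<ge> l1_on S w - l1_on S (v - w)"
proof -
  have "l1_on S w \<le> l1_on S v + l1_on S (v - w)"
  proof -
    have "\<bar>w $ i\<bar> \<le> \<bar>v $ i\<bar> + \<bar>(v - w) $ i\<bar>" for i
    proof -
      have "(v - w) $ i = v $ i - w $ i" by simp
      then show ?thesis by linarith
    qed
    then show ?thesis unfolding l1_on_def sum.distrib[symmetric] by (intro sum_mono) auto
  qed
  then show ?thesis by simp
qed

lemma nsp_unique:
  fixes U :: "real^'n^'m"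
  assumes nsp: "NSP k U" and S: "card S \<le> k" and supp: "\<And>i. i \<notin> S \<Longrightarrow> w $ i = 0"
    and v: "U *v v = U *v w" "v \<noteq> w"
  shows "l1 w < l1 v"
proof -
  let ?h = "v - w"
  have "?h \<noteq> 0" "U *v ?h = 0" using v by (auto simp: matrix_vector_mult_diff_distrib)
  then have lt: "l1_on S ?h < l1_on (- S) ?h" using nsp[unfolded NSP_def, rule_format, OF conjI, of ?h] S by blast
  have "l1_on (- S) ?h = l1_on (- S) v" unfolding l1_on_def using supp by (intro sum.cong) auto
  moreover have "l1_on (- S) w = 0" using supp by (intro l1_on_zero) auto
  moreover note l1_on_tri[of S w v] l1_split[of w S] l1_split[of v S]
  ultimately show ?thesis using lt by linarith
qed

lemma nsp_argmin:
  fixes U :: "real^'n^'m"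
  assumes nsp: "NSP k U" and S: "card S \<le> k" and supp: "\<And>i. i \<notin> S \<Longrightarrow> w $ i = 0"
    and b: "U *v w = b"
  shows "l1_argmin U b w \<and> (\<forall>v. l1_argmin U b v \<longrightarrow> v = w) \<and> vec_sparse k w"
proof (intro conjI allI impI)
  show "l1_argmin U b w" unfolding l1_argmin_def
  proof (intro conjI allI impI)
    fix v assume v: "U *v v = b"
    show "l1 w \<le> l1 v"
    proof (cases "v = w")
      case False
      then show ?thesis using nsp_unique[OF nsp S supp, of v] v b by simp
    qed simp
  qed (rule b)
  fix v assume "l1_argmin U b v"
  then have v: "U *v v = b" "l1 v \<le> l1 w" using b unfolding l1_argmin_def by auto
  show "v = w"
  proof (rule ccontr)
    assume "v \<noteq> w"
    then have "l1 w < l1 v" using nsp_unique[OF nsp S supp, of v] v b by simp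
    then show False using v by simp
  qed
next
  have "{i. w $ i \<noteq> 0} \<subseteq> S" using supp by auto
  then have "card {i. w $ i \<noteq> 0} \<le> card S" by (rule card_mono[OF finite])
  then show "vec_sparse k w" unfolding vec_sparse_def using S by simp
qed

lemma nsp_kernel_zero:
  fixes U :: "real^'n^'m"
  assumes nsp: "NSP k U" and S: "card S \<le> k" and supp: "\<And>i. i \<notin> S \<Longrightarrow> h $ i = 0"
    and "U *v h = 0"
  shows "h = 0"
proof (rule ccontr)
  assume "h \<noteq> 0"
  then have "l1_on S h < l1_on (- S) h" using nsp[unfolded NSP_def, rule_format, OF conjI, of h] S assms(4) by blast
  moreover have "l1_on (- S) h = 0" using supp by (intro l1_on_zero) auto
  ultimately show False using l1_on_nonneg[of S h] by linarith
qed

lemma nsp_mat_zero: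
  fixes U :: "real^'n^'m" and W :: "real^'c^'n"
  assumes nsp: "NSP k U" and S: "card S \<le> k" and supp: "\<And>r c. r \<notin> S \<Longrightarrow> W $ r $ c = 0"
    and "U ** W = 0"
  shows "W = 0"
proof -
  have "column c W = 0" for c
  proof (rule nsp_kernel_zero[OF nsp S])
    show "column c W $ i = 0" if "i \<notin> S" for i using supp that by (simp add: column_def)
    have "U *v column c W = column c (U ** W)"
      by (simp add: vec_eq_iff column_def matrix_vector_mult_def matrix_matrix_mult_def)
    then show "U *v column c W = 0" using assms(4) by (simp add: column_def vec_eq_iff)
  qed
  then have "column c W $ i = 0" for i c by simp
  then have "W $ i $ c = 0" for i c by (simp add: column_def)
  then show ?thesis by (simp add: vec_eq_iff)
qed


lemma mm_add_rdistrib: "(B + C) ** (A::real^_^_) = B ** A + C ** A"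
  by (vector matrix_matrix_mult_def sum.distrib[symmetric] field_simps)
lemma mm_sub_ldistrib: "(A::real^_^_) ** (B - C) = A ** B - A ** C"
  by (vector matrix_matrix_mult_def sum_subtractf[symmetric] field_simps)
lemma mm_sub_rdistrib: "(B - C) ** (A::real^_^_) = B ** A - C ** A"
  by (vector matrix_matrix_mult_def sum_subtractf[symmetric] field_simps)

lemma outer_mult:
  fixes U :: "real^'n^'m" and V :: "real^'p^'q"
  shows "U ** outer u v ** transpose V = outer (U *v u) (V *v v)"
  by (simp add: vec_eq_iff matrix_matrix_mult_def outer_def transpose_def matrix_vector_mult_def
      sum_distrib_left sum_distrib_right mult_ac)

lemma outer_sum_matmult:
  fixes U :: "real^'n^'m" and V :: "real^'p^'q"
  shows "U ** (\<Sum>i<(K::nat). outer (u i) (v i)) ** transpose V = (\<Sum>i<K. outer (U *v u i) (V *v v i))"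
  by (induction K) (simp_all add: matrix_add_ldistrib mm_add_rdistrib outer_mult)

lemma transpose_outer_sum:
  "transpose (\<Sum>i<K. outer (u i) (v i)) = (\<Sum>i<K. outer (v i) (u i))"
  by (simp add: vec_eq_iff transpose_def outer_def sum_component mult.commute)

lemma transpose_zero0: "transpose (0::real^_^_) = 0" by (simp add: transpose_def vec_eq_iff)


theorem mainTheorem3:
  fixes X :: "real^'N2^'N1"
    and U1 :: "real^'N1^'m1" and U2 :: "real^'N2^'m2"
    and b1 :: "nat \<Rightarrow> real^'m1" and b2 :: "nat \<Rightarrow> real^'m2"
    and k K :: nat
  assumes "mat_sparse k X"
    and "NSP k U1" and "NSP k U2"
    and "K = rank (U1 ** X ** transpose U2)"
    and "U1 ** X ** transpose U2 = (\<Sum>i<K. outer (b1 i) (b2 i))"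
  shows "\<exists>w1 w2.
      (\<forall>i<K. l1_argmin U1 (b1 i) (w1 i) \<and> (\<forall>v. l1_argmin U1 (b1 i) v \<longrightarrow> v = w1 i)
              \<and> vec_sparse k (w1 i)) \<and>
      (\<forall>i<K. l1_argmin U2 (b2 i) (w2 i) \<and> (\<forall>v. l1_argmin U2 (b2 i) v \<longrightarrow> v = w2 i)
              \<and> vec_sparse k (w2 i)) \<and>
      X = (\<Sum>i<K. outer (w1 i) (w2 i))"
proof -
  define Y where "Y = U1 ** X ** transpose U2"
  define P where "P = {(i, j). X $ i $ j \<noteq> 0}"
  define R where "R = fst ` P"
  define C where "C = snd ` P"
  have cP: "card P \<le> k" using assms(1) unfolding mat_sparse_def P_def .
  have cR: "card R \<le> k" unfolding R_def using card_image_le[of P fst] cP by simp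
  have cC: "card C \<le> k" unfolding C_def using card_image_le[of P snd] cP by simp
  have XR: "X $ r $ c = 0" if "r \<notin> R" for r c
    using that unfolding R_def P_def by (force simp: image_iff)
  have XC: "X $ r $ c = 0" if "c \<notin> C" for r c
    using that unfolding C_def P_def by (force simp: image_iff)
  have YT: "transpose Y = U2 ** transpose X ** transpose U1"
    unfolding Y_def by (simp add: matrix_transpose_mul matrix_mul_assoc)
  have YT2: "transpose Y = (\<Sum>i<K. outer (b2 i) (b1 i))"
    unfolding Y_def assms(5) by (rule transpose_outer_sum)
  have rY: "rank Y = K" "rank (transpose Y) = K" using assms(4) Y_def rank_transpose by auto
  have ex1: "\<exists>w. (\<forall>r. r \<notin> R \<longrightarrow> w $ r = 0) \<and> U1 *v w = b1 j" if jK: "j < K" for j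
  proof -
    obtain x where x: "b1 j = Y *v x"
      using rank_decomp_range[OF rY(1) _ jK] assms(5) Y_def by blast
    let ?w = "X *v (transpose U2 *v x)"
    have "\<forall>r. r \<notin> R \<longrightarrow> ?w $ r = 0" by (simp add: matrix_vector_mult_def XR)
    moreover have "U1 *v ?w = b1 j" by (simp only: x Y_def matrix_vector_mul_assoc matrix_mul_assoc)
    ultimately show ?thesis by blast
  qed
  have ex2: "\<exists>w. (\<forall>r. r \<notin> C \<longrightarrow> w $ r = 0) \<and> U2 *v w = b2 j" if jK: "j < K" for j
  proof -
    obtain x where x: "b2 j = transpose Y *v x"
      using rank_decomp_range[OF rY(2) YT2 jK] by blast
    let ?w = "transpose X *v (transpose U1 *v x)"
    have "\<forall>r. r \<notin> C \<longrightarrow> ?w $ r = 0" by (simp add: matrix_vector_mult_def transpose_def XC)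
    moreover have "U2 *v ?w = b2 j" by (simp only: x YT matrix_vector_mul_assoc matrix_mul_assoc)
    ultimately show ?thesis by blast
  qed
  obtain w1 where w1: "\<And>j. j < K \<Longrightarrow> (\<forall>r. r \<notin> R \<longrightarrow> w1 j $ r = 0) \<and> U1 *v w1 j = b1 j"
    using ex1 by metis
  obtain w2 where w2: "\<And>j. j < K \<Longrightarrow> (\<forall>r. r \<notin> C \<longrightarrow> w2 j $ r = 0) \<and> U2 *v w2 j = b2 j"
    using ex2 by metis
  define S where "S = (\<Sum>i<K. outer (w1 i) (w2 i))"
  define Z where "Z = X - S"
  have "U1 ** S ** transpose U2 = (\<Sum>i<K. outer (U1 *v w1 i) (U2 *v w2 i))"
    unfolding S_def by (rule outer_sum_matmult)
  also have "\<dots> = Y" unfolding Y_def assms(5) using w1 w2 by (intro sum.cong) auto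
  finally have SY: "U1 ** S ** transpose U2 = Y" .
  have Z0: "U1 ** Z ** transpose U2 = 0"
    unfolding Z_def mm_sub_ldistrib mm_sub_rdistrib SY Y_def by simp
  have ZR: "Z $ r $ c = 0" if "r \<notin> R" for r c
    using that w1 XR by (simp add: Z_def S_def outer_def sum_component)
  have ZC: "Z $ r $ c = 0" if "c \<notin> C" for r c
    using that w2 XC by (simp add: Z_def S_def outer_def sum_component)
  have "Z ** transpose U2 = 0"
  proof (rule nsp_mat_zero[OF assms(2) cR])
    show "(Z ** transpose U2) $ r $ c = 0" if "r \<notin> R" for r c
      using that ZR by (simp add: matrix_matrix_mult_def)
    show "U1 ** (Z ** transpose U2) = 0" using Z0 by (simp add: matrix_mul_assoc)
  qed
  then have "U2 ** transpose Z = 0"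
    by (metis matrix_transpose_mul transpose_transpose transpose_zero0)
  then have "transpose Z = 0"
    by (rule nsp_mat_zero[OF assms(3) cC, rotated]) (simp add: transpose_def ZC)
  then have "Z = 0" by (metis transpose_transpose transpose_zero0)
  then have XS: "X = S" unfolding Z_def by simp
  have A1: "\<forall>i<K. l1_argmin U1 (b1 i) (w1 i) \<and> (\<forall>v. l1_argmin U1 (b1 i) v \<longrightarrow> v = w1 i)
              \<and> vec_sparse k (w1 i)"
  proof (intro allI impI)
    fix i assume i: "i < K"
    show "l1_argmin U1 (b1 i) (w1 i) \<and> (\<forall>v. l1_argmin U1 (b1 i) v \<longrightarrow> v = w1 i)
              \<and> vec_sparse k (w1 i)"
      by (rule nsp_argmin[OF assms(2) cR]) (use w1[OF i] in auto)
  qed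
  have A2: "\<forall>i<K. l1_argmin U2 (b2 i) (w2 i) \<and> (\<forall>v. l1_argmin U2 (b2 i) v \<longrightarrow> v = w2 i)
              \<and> vec_sparse k (w2 i)"
  proof (intro allI impI)
    fix i assume i: "i < K"
    show "l1_argmin U2 (b2 i) (w2 i) \<and> (\<forall>v. l1_argmin U2 (b2 i) v \<longrightarrow> v = w2 i)
              \<and> vec_sparse k (w2 i)"
      by (rule nsp_argmin[OF assms(3) cC]) (use w2[OF i] in auto)
  qed
  show ?thesis using A1 A2 XS unfolding S_def by blast
qed
end
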